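(* Let $m$ be a positive integer written in binary as $m=\sum_{j=1}^{s}2^{m_j}$ with natural numbers $m_1>m_2>\dots>m_s\ge0$. Then $s_k(m)=0$ for all natural numbers $k\ne m_1,\,m_1-1$.
   Context: For a natural number $m>0$ and $k\in\{0,1,2,\dots\}$, let $S_k(m)$ be the set of all finite sequences $((m_1,l_1),(m_2,l_2),\dots,(m_t,l_t))$ with $t\ge1$ of pairs of natural numbers such that $k=m_1>m_2>\dots>m_t\ge0$, $m_j\ge l_j\ge0$ for $j=1,\dots,t$, and $m=\sum_{j=1}^{t}\sum_{p=0}^{l_j}2^{m_j-p}$. Let $s_k(m)=|S_k(m)|$. (In the claim, the $m_j$ denote the binary digits positions of $m$, independent of the notation inside the definition of $S_k(m)$.) *)

theory Defs
  imports Main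
begin

definition S :: "nat \<Rightarrow> nat \<Rightarrow> (nat \<times> nat) list set" where
  "S k m = {xs. xs \<noteq> [] \<and> fst (hd xs) = k
      \<and> sorted_wrt (\<lambda>a b. fst a > fst b) xs
      \<and> (\<forall>(mj, lj) \<in> set xs. lj \<le> mj)
      \<and> m = (\<Sum>(mj, lj) \<leftarrow> xs. \<Sum>p = 0..lj. 2 ^ (mj - p))}"

definition s :: "nat \<Rightarrow> nat \<Rightarrow> nat" where
  "s k m = card (S k m)"

end

theory Submission
  imports Defs
begin

lemma binsum_lt: "sorted_wrt (>) ms \<Longrightarrow> \<forall>j\<in>set ms. j < n \<Longrightarrow> (\<Sum>j \<leftarrow> ms. 2 ^ j) < (2::nat) ^ n"
proof (induction ms arbitrary: n)
  case Nil then show ?case by simp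
next
  case (Cons x xs)
  have "(\<Sum>j \<leftarrow> xs. 2 ^ j) < (2::nat) ^ x" using Cons by auto
  moreover have "(2::nat) ^ Suc x \<le> 2 ^ n" using Cons.prems by (intro power_increasing) auto
  ultimately show ?case by simp
qed

lemma block_eq: "l \<le> mj \<Longrightarrow> (\<Sum>p = 0..l. (2::nat) ^ (mj - p)) + 2 ^ (mj - l) = 2 ^ Suc mj"
proof (induction l)
  case 0 then show ?case by simp
next
  case (Suc l)
  have e: "mj - l = Suc (mj - Suc l)" using Suc.prems by simp
  have "(\<Sum>p = 0..Suc l. (2::nat) ^ (mj - p)) + 2 ^ (mj - Suc l)
      = (\<Sum>p = 0..l. (2::nat) ^ (mj - p)) + 2 ^ (mj - l)"
    using e by simp
  also have "\<dots> = 2 ^ Suc mj" using Suc by simp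
  finally show ?case .
qed

lemma block_lt: "l \<le> mj \<Longrightarrow> (\<Sum>p = 0..l. (2::nat) ^ (mj - p)) < 2 ^ Suc mj"
  using block_eq[of l mj] by (metis add_less_same_cancel1 less_add_same_cancel1 not_less_eq zero_less_power zero_less_numeral)

lemma block_ge: "(2::nat) ^ mj \<le> (\<Sum>p = 0..l. (2::nat) ^ (mj - p))"
proof -
  have "(\<Sum>p \<in> {0}. (2::nat) ^ (mj - p)) \<le> (\<Sum>p = 0..l. (2::nat) ^ (mj - p))"
    by (intro sum_mono2) auto
  then show ?thesis by simp
qed

lemma pairsum_lt: "sorted_wrt (\<lambda>a b. fst a > fst b) xs \<Longrightarrow> (\<forall>(mj, lj) \<in> set xs. lj \<le> mj)
  \<Longrightarrow> \<forall>a\<in>set xs. fst a < n \<Longrightarrow> (\<Sum>(mj, lj) \<leftarrow> xs. \<Sum>p = 0..lj. (2::nat) ^ (mj - p)) < 2 ^ Suc n"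
proof (induction xs arbitrary: n)
  case Nil then show ?case by simp
next
  case (Cons x xs)
  obtain a b where x: "x = (a, b)" by fastforce
  have "(\<Sum>(mj, lj) \<leftarrow> xs. \<Sum>p = 0..lj. (2::nat) ^ (mj - p)) < 2 ^ Suc a" using Cons x by auto
  moreover have "(\<Sum>p = 0..b. (2::nat) ^ (a - p)) < 2 ^ Suc a" using Cons.prems x by (intro block_lt) auto
  moreover have "(2::nat) ^ Suc (Suc a) \<le> 2 ^ Suc n" using Cons.prems x by (intro power_increasing) auto
  ultimately show ?case using x by simp
qed

theorem lemma4p4:
  fixes m k :: nat and ms :: "nat list"
  assumes "m > 0"
    and "ms \<noteq> []"
    and "sorted_wrt (>) ms"
    and "m = (\<Sum>j \<leftarrow> ms. 2 ^ j)"
    and "k \<noteq> hd ms"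
    and "k \<noteq> hd ms - 1"
  shows "s k m = 0"
proof -
  obtain h rest where ms: "ms = h # rest" using assms(2) by (cases ms) auto
  have "(\<Sum>j \<leftarrow> rest. 2 ^ j) < (2::nat) ^ h" using binsum_lt[of rest h] assms(3) ms by auto
  then have mlt: "m < 2 ^ Suc h" using assms(4) ms by simp
  have mge: "2 ^ h \<le> m" using assms(4) ms by simp
  have "S k m = {}"
  proof (rule ccontr)
    assume "S k m \<noteq> {}"
    then obtain xs where xs: "xs \<in> S k m" by blast
    then obtain l ys where xs': "xs = (k, l) # ys" unfolding S_def
      by (cases xs) auto
    have st: "sorted_wrt (\<lambda>a b. fst a > fst b) ys" "\<forall>(mj, lj) \<in> set ys. lj \<le> mj"
      "\<forall>a\<in>set ys. fst a < k" "l \<le> k"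
      using xs xs' unfolding S_def by auto
    have r: "(\<Sum>(mj, lj) \<leftarrow> ys. \<Sum>p = 0..lj. (2::nat) ^ (mj - p)) < 2 ^ Suc k"
      using pairsum_lt[OF st(1,2,3)] .
    have b1: "(\<Sum>p = 0..l. (2::nat) ^ (k - p)) < 2 ^ Suc k" using block_lt st(4) .
    have b2: "(2::nat) ^ k \<le> (\<Sum>p = 0..l. (2::nat) ^ (k - p))" by (rule block_ge)
    have meq: "m = (\<Sum>p = 0..l. (2::nat) ^ (k - p)) + (\<Sum>(mj, lj) \<leftarrow> ys. \<Sum>p = 0..lj. (2::nat) ^ (mj - p))"
      using xs xs' unfolding S_def by auto
    have u: "m < 2 ^ Suc (Suc k)" using meq r b1 by simp
    have lo: "2 ^ k \<le> m" using meq b2 by simp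
    have "h \<ge> k"
    proof (rule ccontr)
      assume "\<not> h \<ge> k"
      then have "(2::nat) ^ Suc h \<le> 2 ^ k" by (intro power_increasing) auto
      then show False using mlt lo by simp
    qed
    moreover have "h \<le> Suc k"
    proof (rule ccontr)
      assume "\<not> h \<le> Suc k"
      then have "(2::nat) ^ Suc (Suc k) \<le> 2 ^ h" by (intro power_increasing) auto
      then show False using mge u by simp
    qed
    ultimately show False using assms(5,6) ms by auto
  qed
  then show ?thesis unfolding s_def by simp
qed

end
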